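(* Let $i,j,k$ be the three elements of $\{1,2,3\}$ in any order, and let $\ell:\mathbb{R}^3\to\mathbb{R}$ be a linear functional with $\partial\ell/\partial\xi_k\neq0$. Then there is $C<\infty$ depending on $\ell$ such that for all nonnegative measurable functions $G$ on $\mathbb{R}^2$ and $g_1,g_2,g_3$ on $\mathbb{R}$, and all measurable sets $E\subset\mathbb{R}$ and $S\subset\mathbb{R}^3$, \[ \int_{\mathbb{R}^3}\prod_{n=1}^3g_n(\xi_n)\,G(\xi_1-\xi_2+\xi_3,\ \xi_1^2-\xi_2^2+\xi_3^2)\,\chi_S(\xi)\chi_E(\ell(\xi))\,d\xi_1\,d\xi_2\,d\xi_3\le C\|G\|_{L^2}\prod_{n=1}^3\|g_n\|_{L^2}\,|E|^{1/2}\Big(\min_{\xi\in S}|\xi_i-\xi_j|\Big)^{-1/2}. \]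
   Context: Here $\xi=(\xi_1,\xi_2,\xi_3)$; the set $S$ may equivalently be viewed as a subset of the hyperplane $\{\xi_1-\xi_2+\xi_3-\xi_4=0\}\subset\mathbb{R}^4$ via $\xi_4=\xi_1-\xi_2+\xi_3$. $\chi$ denotes indicator functions and $|E|$ Lebesgue measure. *)

theory Defs
  imports "HOL-Analysis.Analysis"
begin

definition esqrt :: "ennreal \<Rightarrow> ennreal" where
  "esqrt x = (if x = top then top else ennreal (sqrt (enn2real x)))"

definition L2norm :: "('a::euclidean_space \<Rightarrow> ennreal) \<Rightarrow> ennreal" where
  "L2norm f = esqrt (\<integral>\<^sup>+ x. (f x)\<^sup>2 \<partial>lebesgue)"

end

theory Submission
  imports Defs
begin


definition psi :: "3 \<Rightarrow> 3 \<Rightarrow> real \<Rightarrow> real \<Rightarrow> real \<Rightarrow> real^3" where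
  "psi a b x y z = (\<chi> n. if n = a then x else if n = b then y else z)"

lemma psi_meas[measurable]:
  "(\<lambda>p::real\<times>real\<times>real. psi a b (fst p) (fst (snd p)) (snd (snd p))) \<in> borel_measurable borel"
  unfolding psi_def
proof (intro borel_measurable_continuous_onI continuous_on_vec_lambda)
  fix n show "continuous_on UNIV (\<lambda>x::real\<times>real\<times>real. if n = a then fst x else if n = b then fst (snd x) else snd (snd x))"
    by (cases "n = a"; cases "n = b") (auto intro!: continuous_intros)
qed

lemma psi_meas2[measurable]:
  "(\<lambda>q::real\<times>real. psi a b x (fst q) (snd q)) \<in> borel_measurable borel"
  unfolding psi_def
proof (intro borel_measurable_continuous_onI continuous_on_vec_lambda)
  fix n show "continuous_on UNIV (\<lambda>q::real\<times>real. if n = a then x else if n = b then fst q else snd q)"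
    by (cases "n = a"; cases "n = b") (auto intro!: continuous_intros)
qed

lemma psi_meas_raw[measurable (raw)]:
  assumes "f \<in> borel_measurable M" "g \<in> borel_measurable M" "h \<in> borel_measurable M"
  shows "(\<lambda>x. psi a b (f x) (g x) (h x)) \<in> borel_measurable M"
proof -
  have "(\<lambda>x. (f x, (g x, h x))) \<in> M \<rightarrow>\<^sub>M borel \<Otimes>\<^sub>M (borel \<Otimes>\<^sub>M borel)" using assms by measurable
  then have "(\<lambda>x. (f x, (g x, h x))) \<in> M \<rightarrow>\<^sub>M borel" by (simp add: borel_prod)
  from measurable_compose[OF this psi_meas] show ?thesis by simp
qed

lemma UNIV3: "a \<noteq> b \<Longrightarrow> b \<noteq> c \<Longrightarrow> a \<noteq> c \<Longrightarrow> (UNIV :: 3 set) = {a,b,c}"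
proof -
  assume "a \<noteq> b" "b \<noteq> c" "a \<noteq> c"
  then have "card {a,b,c} = 3" by auto
  moreover have "card (UNIV::3 set) = 3" by simp
  ultimately show ?thesis by (metis card_subset_eq finite subset_UNIV)
qed

lemma distr_psi:
  assumes "a \<noteq> b" "b \<noteq> c" "a \<noteq> c"
  shows "distr (lborel :: (real\<times>real\<times>real) measure) borel
     (\<lambda>p. psi a b (fst p) (fst (snd p)) (snd (snd p))) = lborel"
proof (rule lborel_eqI[symmetric])
  fix l u :: "real^3"
  assume le: "\<And>bb. bb \<in> Basis \<Longrightarrow> l \<bullet> bb \<le> u \<bullet> bb"
  have lec: "l$n \<le> u$n" for n using le[of "axis n 1"] by (auto simp: Basis_vec_def inner_axis)
  have U: "(UNIV :: 3 set) = {a,b,c}" using UNIV3 assms by blast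
  have pre: "(\<lambda>p. psi a b (fst p) (fst (snd p)) (snd (snd p))) -` box l u
     = {l$a<..<u$a} \<times> ({l$b<..<u$b} \<times> {l$c<..<u$c})"
  proof -
    have "psi a b x y z \<in> box l u \<longleftrightarrow> (l$a < x \<and> x < u$a) \<and> (l$b < y \<and> y < u$b) \<and> (l$c < z \<and> z < u$c)" for x y z
      unfolding mem_box_cart psi_def using assms U by auto
    then show ?thesis by auto
  qed
  show "emeasure (distr lborel borel (\<lambda>p. psi a b (fst p) (fst (snd p)) (snd (snd p)))) (box l u)
        = ennreal (\<Prod>bb\<in>Basis. (u - l) \<bullet> bb)"
  proof -
    have "emeasure (distr lborel borel (\<lambda>p. psi a b (fst p) (fst (snd p)) (snd (snd p)))) (box l u)
       = emeasure (lborel \<Otimes>\<^sub>M (lborel \<Otimes>\<^sub>M lborel)) ({l$a<..<u$a} \<times> ({l$b<..<u$b} \<times> {l$c<..<u$c}))"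
      by (subst emeasure_distr) (auto simp: pre lborel_prod)
    also have "\<dots> = ennreal ((u$a - l$a) * ((u$b - l$b) * (u$c - l$c)))"
    proof -
      have "emeasure (lborel \<Otimes>\<^sub>M (lborel \<Otimes>\<^sub>M lborel)) ({l$a<..<u$a} \<times> ({l$b<..<u$b} \<times> {l$c<..<u$c}))
        = emeasure (lborel \<Otimes>\<^sub>M (lborel::(real\<times>real) measure)) ({l$a<..<u$a} \<times> ({l$b<..<u$b} \<times> {l$c<..<u$c}))"
        by (simp add: lborel_prod)
      also have "\<dots> = emeasure lborel {l$a<..<u$a} * emeasure (lborel::(real\<times>real) measure) ({l$b<..<u$b} \<times> {l$c<..<u$c})"
        by (rule lborel.emeasure_pair_measure_Times) (auto intro!: borel_open open_Times)
      also have "emeasure (lborel::(real\<times>real) measure) ({l$b<..<u$b} \<times> {l$c<..<u$c}) = 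
          emeasure (lborel \<Otimes>\<^sub>M lborel) ({l$b<..<u$b} \<times> {l$c<..<u$c})"
        by (simp add: lborel_prod)
      also have "\<dots> = emeasure lborel {l$b<..<u$b} * emeasure lborel {l$c<..<u$c}"
        by (rule lborel.emeasure_pair_measure_Times) auto
      finally show ?thesis using lec by (simp add: ennreal_mult)
    qed
    also have "(u$a - l$a) * ((u$b - l$b) * (u$c - l$c)) = (\<Prod>n\<in>UNIV. (u - l) $ n)"
      using assms by (simp add: U)
    also have "\<dots> = (\<Prod>bb\<in>Basis. (u - l) \<bullet> bb)"
      unfolding Basis_vec_def by (subst prod.UNION_disjoint) (auto simp: inner_axis prod.reindex inj_on_def axis_eq_axis)
    finally show ?thesis .
  qed
qed simp
lemma nn_integral_psi:
  fixes f :: "real^3 \<Rightarrow> ennreal"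
  assumes "a \<noteq> b" "b \<noteq> c" "a \<noteq> c" and f[measurable]: "f \<in> borel_measurable borel"
  shows "(\<integral>\<^sup>+\<xi>. f \<xi> \<partial>lborel) = (\<integral>\<^sup>+x. \<integral>\<^sup>+y. \<integral>\<^sup>+z. f (psi a b x y z) \<partial>lborel \<partial>lborel \<partial>lborel)"
proof -
  have "(\<integral>\<^sup>+\<xi>. f \<xi> \<partial>lborel) = (\<integral>\<^sup>+\<xi>. f \<xi> \<partial>(distr (lborel :: (real\<times>real\<times>real) measure) borel
     (\<lambda>p. psi a b (fst p) (fst (snd p)) (snd (snd p)))))"
    using distr_psi[OF assms(1-3)] by simp
  also have "\<dots> = (\<integral>\<^sup>+p. f (psi a b (fst p) (fst (snd p)) (snd (snd p))) \<partial>(lborel :: (real\<times>real\<times>real) measure))"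
    by (rule nn_integral_distr) auto
  also have "\<dots> = (\<integral>\<^sup>+p. f (psi a b (fst p) (fst (snd p)) (snd (snd p))) \<partial>(lborel \<Otimes>\<^sub>M (lborel :: (real\<times>real) measure)))"
    by (simp add: lborel_prod)
  also have "\<dots> = (\<integral>\<^sup>+x. \<integral>\<^sup>+q. f (psi a b x (fst q) (snd q)) \<partial>(lborel :: (real\<times>real) measure) \<partial>lborel)"
    by (subst lborel.nn_integral_fst[symmetric]) (auto simp: lborel_prod)
  also have "\<dots> = (\<integral>\<^sup>+x. \<integral>\<^sup>+y. \<integral>\<^sup>+z. f (psi a b x y z) \<partial>lborel \<partial>lborel \<partial>lborel)"
  proof (rule nn_integral_cong)
    fix x
    have "(\<integral>\<^sup>+q. f (psi a b x (fst q) (snd q)) \<partial>(lborel :: (real\<times>real) measure))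
       = (\<integral>\<^sup>+q. f (psi a b x (fst q) (snd q)) \<partial>(lborel \<Otimes>\<^sub>M lborel))"
      by (simp add: lborel_prod)
    also have "\<dots> = (\<integral>\<^sup>+y. \<integral>\<^sup>+z. f (psi a b x y z) \<partial>lborel \<partial>lborel)"
    proof (subst lborel.nn_integral_fst[symmetric])
      have "(\<lambda>q. f (psi a b x (fst q) (snd q))) \<in> borel_measurable borel"
        by (rule measurable_compose[OF psi_meas2 f])
      then show "(\<lambda>q. f (psi a b x (fst q) (snd q))) \<in> borel_measurable (lborel \<Otimes>\<^sub>M lborel)"
        by (simp add: lborel_prod)
    qed simp
    finally show "(\<integral>\<^sup>+q. f (psi a b x (fst q) (snd q)) \<partial>(lborel :: (real\<times>real) measure))
       = (\<integral>\<^sup>+y. \<integral>\<^sup>+z. f (psi a b x y z) \<partial>lborel \<partial>lborel)" .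
  qed
  finally show ?thesis .
qed

lemma psi_axis:
  assumes "a \<noteq> b" "b \<noteq> c" "a \<noteq> c"
  shows "psi a b x y z = x *\<^sub>R axis a 1 + y *\<^sub>R axis b 1 + z *\<^sub>R axis c 1"
  using assms UNIV3[OF assms] unfolding psi_def
  by (auto simp: vec_eq_iff axis_def)

lemma linear_psi:
  assumes "a \<noteq> b" "b \<noteq> c" "a \<noteq> c" "linear l"
  shows "l (psi a b x y z) = x * l (axis a 1) + y * l (axis b 1) + z * l (axis c 1)"
  using assms(4) unfolding psi_axis[OF assms(1-3)]
  by (simp add: real_vector.linear_add real_vector.linear_scale)



lemma SUP_indicator_atLeast:
  fixes F :: "ennreal"
  shows "(SUP n::nat. F * indicator {a..a + real (Suc n)} w) = F * indicator {a..} (w::real)"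
proof (cases "a \<le> w")
  case True
  obtain n::nat where n: "w - a \<le> real n" using real_arch_simple by blast
  show ?thesis
  proof (rule antisym)
    show "(SUP n::nat. F * indicator {a..a + real (Suc n)} w) \<le> F * indicator {a..} w"
      by (rule SUP_least) (auto simp: indicator_def)
    show "F * indicator {a..} w \<le> (SUP n::nat. F * indicator {a..a + real (Suc n)} w)"
      by (rule SUP_upper2[of n]) (use True n in \<open>auto simp: indicator_def\<close>)
  qed
next
  case False
  then show ?thesis by (auto simp: indicator_def)
qed

lemma Q_half_bounded:
  fixes K :: "real \<Rightarrow> ennreal"
  assumes K[measurable]: "K \<in> borel_measurable borel" and \<beta>: "\<beta> > 0" and a: "a > 0" and ab: "a < b"
  shows "(\<integral>\<^sup>+w. K (\<beta> * w\<^sup>2) * indicator {a..b} w \<partial>lborel) \<le> ennreal (1/(2*\<beta>*a)) * (\<integral>\<^sup>+s. K s \<partial>lborel)"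
proof -
  have sub: "(\<integral>\<^sup>+s. K s * indicator {\<beta> * a\<^sup>2..\<beta> * b\<^sup>2} s \<partial>lborel) =
    (\<integral>\<^sup>+w. K (\<beta> * w\<^sup>2) * ennreal (2*\<beta>*w) * indicator {a..b} w \<partial>lborel)"
  proof -
    have d: "((\<lambda>w. \<beta> * w\<^sup>2) has_real_derivative 2*\<beta>*x) (at x)" for x
      by (auto intro!: derivative_eq_intros)
    show ?thesis
      using nn_integral_substitution_aux[OF K _ d _ _ ab] a \<beta>
      by (auto intro!: continuous_intros)
  qed
  have "(\<integral>\<^sup>+w. K (\<beta> * w\<^sup>2) * indicator {a..b} w \<partial>lborel) \<le>
     (\<integral>\<^sup>+w. ennreal (1/(2*\<beta>*a)) * (K (\<beta> * w\<^sup>2) * ennreal (2*\<beta>*w) * indicator {a..b} w) \<partial>lborel)"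
  proof (rule nn_integral_mono)
    fix w
    show "K (\<beta> * w\<^sup>2) * indicator {a..b} w \<le> ennreal (1/(2*\<beta>*a)) * (K (\<beta> * w\<^sup>2) * ennreal (2*\<beta>*w) * indicator {a..b} w)"
    proof (cases "w \<in> {a..b}")
      case True
      then have "1 \<le> (1/(2*\<beta>*a)) * (2*\<beta>*w)" using a \<beta> by (auto simp: field_simps)
      then have "1 \<le> ennreal (1/(2*\<beta>*a)) * ennreal (2*\<beta>*w)"
        using a \<beta> True by (simp add: ennreal_mult[symmetric] ennreal_1[symmetric] del: ennreal_1)
      then have "K (\<beta> * w\<^sup>2) * 1 \<le> K (\<beta> * w\<^sup>2) * (ennreal (1/(2*\<beta>*a)) * ennreal (2*\<beta>*w))"
        by (rule mult_left_mono) simp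
      then show ?thesis using True by (simp add: mult_ac)
    qed simp
  qed
  also have "\<dots> = ennreal (1/(2*\<beta>*a)) * (\<integral>\<^sup>+s. K s * indicator {\<beta> * a\<^sup>2..\<beta> * b\<^sup>2} s \<partial>lborel)"
    by (simp add: nn_integral_cmult sub)
  also have "\<dots> \<le> ennreal (1/(2*\<beta>*a)) * (\<integral>\<^sup>+s. K s \<partial>lborel)"
    by (intro mult_left_mono nn_integral_mono) (auto simp: indicator_def)
  finally show ?thesis .
qed

lemma Q_half:
  fixes K :: "real \<Rightarrow> ennreal"
  assumes K[measurable]: "K \<in> borel_measurable borel" and \<beta>: "\<beta> > 0" and a: "a > 0"
  shows "(\<integral>\<^sup>+w. K (\<beta> * w\<^sup>2) * indicator {a..} w \<partial>lborel) \<le> ennreal (1/(2*\<beta>*a)) * (\<integral>\<^sup>+s. K s \<partial>lborel)"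
proof -
  have "(\<integral>\<^sup>+w. K (\<beta> * w\<^sup>2) * indicator {a..} w \<partial>lborel) =
     (\<integral>\<^sup>+w. (SUP n::nat. K (\<beta> * w\<^sup>2) * indicator {a..a + real (Suc n)} w) \<partial>lborel)"
    by (rule nn_integral_cong) (rule SUP_indicator_atLeast[symmetric])
  also have "\<dots> = (SUP n::nat. \<integral>\<^sup>+w. K (\<beta> * w\<^sup>2) * indicator {a..a + real (Suc n)} w \<partial>lborel)"
    by (rule nn_integral_monotone_convergence_SUP)
       (auto intro!: incseq_SucI le_funI mult_left_mono simp: indicator_def)
  also have "\<dots> \<le> ennreal (1/(2*\<beta>*a)) * (\<integral>\<^sup>+s. K s \<partial>lborel)"
    by (rule SUP_least, rule Q_half_bounded) (use assms in auto)
  finally show ?thesis .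
qed

lemma Q_full:
  fixes K :: "real \<Rightarrow> ennreal"
  assumes K[measurable]: "K \<in> borel_measurable borel" and \<beta>: "\<beta> > 0" and a: "a > 0"
  shows "(\<integral>\<^sup>+w. K (\<beta> * w\<^sup>2) * indicator {w. a \<le> \<bar>w\<bar>} w \<partial>lborel) \<le> ennreal (1/(\<beta>*a)) * (\<integral>\<^sup>+s. K s \<partial>lborel)"
proof -
  have split: "K (\<beta> * w\<^sup>2) * indicator {w. a \<le> \<bar>w\<bar>} w = K (\<beta> * w\<^sup>2) * indicator {a..} w + K (\<beta> * (-w)\<^sup>2) * indicator {a..} (-w)" for w
    using a by (auto simp: indicator_def)
  have "(\<integral>\<^sup>+w. K (\<beta> * w\<^sup>2) * indicator {w. a \<le> \<bar>w\<bar>} w \<partial>lborel) =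
     (\<integral>\<^sup>+w. K (\<beta> * w\<^sup>2) * indicator {a..} w \<partial>lborel) + (\<integral>\<^sup>+w. K (\<beta> * (-w)\<^sup>2) * indicator {a..} (-w) \<partial>lborel)"
    unfolding split by (rule nn_integral_add) auto
  also have "(\<integral>\<^sup>+w. K (\<beta> * (-w)\<^sup>2) * indicator {a..} (-w) \<partial>lborel) = (\<integral>\<^sup>+w. K (\<beta> * w\<^sup>2) * indicator {a..} w \<partial>lborel)"
    using nn_integral_real_affine[of "\<lambda>w. K (\<beta> * w\<^sup>2) * indicator {a..} w" "-1" 0] by simp
  also have "(\<integral>\<^sup>+w. K (\<beta> * w\<^sup>2) * indicator {a..} w \<partial>lborel) + (\<integral>\<^sup>+w. K (\<beta> * w\<^sup>2) * indicator {a..} w \<partial>lborel)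
     \<le> ennreal (1/(2*\<beta>*a)) * (\<integral>\<^sup>+s. K s \<partial>lborel) + ennreal (1/(2*\<beta>*a)) * (\<integral>\<^sup>+s. K s \<partial>lborel)"
    by (intro add_mono Q_half) (use assms in auto)
  also have "\<dots> = ennreal (1/(\<beta>*a)) * (\<integral>\<^sup>+s. K s \<partial>lborel)"
    using a \<beta> by (simp add: distrib_right[symmetric] ennreal_plus[symmetric] del: ennreal_plus)
  finally show ?thesis .
qed



lemma H_pair_meas[measurable (raw)]:
  fixes H :: "real \<times> real \<Rightarrow> ennreal"
  assumes "H \<in> borel_measurable borel" "f \<in> borel_measurable M" "g \<in> borel_measurable M"
  shows "(\<lambda>x. H (f x, g x)) \<in> borel_measurable M"
proof -
  have "(\<lambda>x. (f x, g x)) \<in> M \<rightarrow>\<^sub>M borel \<Otimes>\<^sub>M borel" using assms by measurable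
  then have "(\<lambda>x. (f x, g x)) \<in> M \<rightarrow>\<^sub>M borel" by (simp add: borel_prod)
  then show ?thesis using assms(1) by (rule measurable_compose)
qed

lemma aff_inv:
  fixes K :: "real \<Rightarrow> ennreal"
  assumes [measurable]: "K \<in> borel_measurable borel" and b: "\<beta> \<noteq> 0"
  shows "(\<integral>\<^sup>+x. K (t + \<beta> * x) \<partial>lborel) = ennreal (1/\<bar>\<beta>\<bar>) * (\<integral>\<^sup>+x. K x \<partial>lborel)"
proof -
  have "ennreal (1/\<bar>\<beta>\<bar>) * (\<integral>\<^sup>+x. K x \<partial>lborel) = ennreal (1/\<bar>\<beta>\<bar>) * (ennreal \<bar>\<beta>\<bar> * (\<integral>\<^sup>+x. K (t + \<beta> * x) \<partial>lborel))"
    by (subst nn_integral_real_affine[OF _ b, of K t]) auto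
  also have "\<dots> = (\<integral>\<^sup>+x. K (t + \<beta> * x) \<partial>lborel)"
    using b by (simp add: mult.assoc[symmetric] ennreal_mult[symmetric] del: ennreal_mult')
  finally show ?thesis ..
qed

lemma transl:
  fixes K :: "real \<Rightarrow> ennreal"
  assumes [measurable]: "K \<in> borel_measurable borel"
  shows "(\<integral>\<^sup>+x. K (t + x) \<partial>lborel) = (\<integral>\<^sup>+x. K x \<partial>lborel)"
  using aff_inv[OF assms, of 1 t] by simp

lemma H_iter:
  fixes H :: "real \<times> real \<Rightarrow> ennreal"
  assumes H[measurable]: "H \<in> borel_measurable borel" and s: "\<bar>\<sigma>\<bar> = 1"
  shows "(\<integral>\<^sup>+u. \<integral>\<^sup>+s. H (t + \<sigma> * u, s) \<partial>lborel \<partial>lborel) = (\<integral>\<^sup>+p. H p \<partial>lborel)"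
proof -
  have m: "(\<lambda>u. \<integral>\<^sup>+s. H (u, s) \<partial>lborel) \<in> borel_measurable borel"
  proof -
    have "H \<in> borel_measurable (lborel \<Otimes>\<^sub>M lborel)"
      by (simp add: lborel_prod)
    from lborel.borel_measurable_nn_integral_fst[OF this]
    have "(\<lambda>u. \<integral>\<^sup>+s. H (u, s) \<partial>lborel) \<in> borel_measurable lborel" by simp
    then show ?thesis by simp
  qed
  have "(\<integral>\<^sup>+u. \<integral>\<^sup>+s. H (t + \<sigma> * u, s) \<partial>lborel \<partial>lborel) = (\<integral>\<^sup>+u. \<integral>\<^sup>+s. H (u, s) \<partial>lborel \<partial>lborel)"
    using aff_inv[OF m, of \<sigma> t] s by auto
  also have "\<dots> = (\<integral>\<^sup>+p. H p \<partial>(lborel \<Otimes>\<^sub>M lborel))"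
    by (subst lborel.nn_integral_fst[symmetric]) (auto simp: lborel_prod)
  also have "\<dots> = (\<integral>\<^sup>+p. H p \<partial>lborel)" by (simp add: lborel_prod)
  finally show ?thesis .
qed

lemma OPP:
  fixes H :: "real \<times> real \<Rightarrow> ennreal"
  assumes H[measurable]: "H \<in> borel_measurable borel" and s: "\<bar>\<sigma>\<bar> = 1" and m: "m > 0"
  shows "(\<integral>\<^sup>+x. \<integral>\<^sup>+y. H (c + \<sigma>*(x-y), d + \<sigma>*(x\<^sup>2-y\<^sup>2)) * indicator {t. m \<le> \<bar>t\<bar>} (x-y) \<partial>lborel \<partial>lborel)
     \<le> ennreal (1/(2*m)) * (\<integral>\<^sup>+p. H p \<partial>lborel)"
proof -
  have s0: "\<sigma> \<noteq> 0" using s by auto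
  have "(\<integral>\<^sup>+x. \<integral>\<^sup>+y. H (c + \<sigma>*(x-y), d + \<sigma>*(x\<^sup>2-y\<^sup>2)) * indicator {t. m \<le> \<bar>t\<bar>} (x-y) \<partial>lborel \<partial>lborel)
     = (\<integral>\<^sup>+x. \<integral>\<^sup>+u. H (c + \<sigma>*u, (d - \<sigma>*u\<^sup>2) + (2*\<sigma>*u)*x) * indicator {t. m \<le> \<bar>t\<bar>} u \<partial>lborel \<partial>lborel)"
  proof (rule nn_integral_cong)
    fix x
    have "(\<integral>\<^sup>+y. H (c + \<sigma>*(x-y), d + \<sigma>*(x\<^sup>2-y\<^sup>2)) * indicator {t. m \<le> \<bar>t\<bar>} (x-y) \<partial>lborel)
       = ennreal \<bar>-1\<bar> * (\<integral>\<^sup>+u. H (c + \<sigma>*(x-(x + -1*u)), d + \<sigma>*(x\<^sup>2-(x + -1*u)\<^sup>2)) * indicator {t. m \<le> \<bar>t\<bar>} (x-(x + -1*u)) \<partial>lborel)"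
      by (rule nn_integral_real_affine) auto
    also have "\<dots> = (\<integral>\<^sup>+u. H (c + \<sigma>*u, (d - \<sigma>*u\<^sup>2) + (2*\<sigma>*u)*x) * indicator {t. m \<le> \<bar>t\<bar>} u \<partial>lborel)"
      by (auto intro!: nn_integral_cong simp: algebra_simps power2_eq_square)
    finally show "(\<integral>\<^sup>+y. H (c + \<sigma>*(x-y), d + \<sigma>*(x\<^sup>2-y\<^sup>2)) * indicator {t. m \<le> \<bar>t\<bar>} (x-y) \<partial>lborel)
       = (\<integral>\<^sup>+u. H (c + \<sigma>*u, (d - \<sigma>*u\<^sup>2) + (2*\<sigma>*u)*x) * indicator {t. m \<le> \<bar>t\<bar>} u \<partial>lborel)" .
  qed
  also have "\<dots> = (\<integral>\<^sup>+u. \<integral>\<^sup>+x. H (c + \<sigma>*u, (d - \<sigma>*u\<^sup>2) + (2*\<sigma>*u)*x) * indicator {t. m \<le> \<bar>t\<bar>} u \<partial>lborel \<partial>lborel)"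
    by (rule lborel_pair.Fubini'[symmetric]) (unfold case_prod_beta, measurable)
  also have "\<dots> \<le> (\<integral>\<^sup>+u. ennreal (1/(2*m)) * (\<integral>\<^sup>+s. H (c + \<sigma>*u, s) \<partial>lborel) \<partial>lborel)"
  proof (rule nn_integral_mono)
    fix u
    show "(\<integral>\<^sup>+x. H (c + \<sigma>*u, (d - \<sigma>*u\<^sup>2) + (2*\<sigma>*u)*x) * indicator {t. m \<le> \<bar>t\<bar>} u \<partial>lborel)
       \<le> ennreal (1/(2*m)) * (\<integral>\<^sup>+s. H (c + \<sigma>*u, s) \<partial>lborel)"
    proof (cases "m \<le> \<bar>u\<bar>")
      case True
      then have u0: "2*\<sigma>*u \<noteq> 0" using m s0 by auto
      have "(\<integral>\<^sup>+x. H (c + \<sigma>*u, (d - \<sigma>*u\<^sup>2) + (2*\<sigma>*u)*x) * indicator {t. m \<le> \<bar>t\<bar>} u \<partial>lborel)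
          = (\<integral>\<^sup>+x. H (c + \<sigma>*u, (d - \<sigma>*u\<^sup>2) + (2*\<sigma>*u)*x) \<partial>lborel)"
        using True by simp
      also have "\<dots> = ennreal (1/\<bar>2*\<sigma>*u\<bar>) * (\<integral>\<^sup>+s. H (c + \<sigma>*u, s) \<partial>lborel)"
        by (rule aff_inv[OF _ u0]) simp
      also have "\<dots> \<le> ennreal (1/(2*m)) * (\<integral>\<^sup>+s. H (c + \<sigma>*u, s) \<partial>lborel)"
        using True m s by (intro mult_right_mono ennreal_leI) (auto simp: abs_mult frac_le)
      finally show ?thesis .
    qed simp
  qed
  also have "\<dots> = ennreal (1/(2*m)) * (\<integral>\<^sup>+u. \<integral>\<^sup>+s. H (c + \<sigma>*u, s) \<partial>lborel \<partial>lborel)"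
    by (rule nn_integral_cmult) (simp add: lborel_prod)
  also have "\<dots> = ennreal (1/(2*m)) * (\<integral>\<^sup>+p. H p \<partial>lborel)"
    using H_iter[OF H s] by simp
  finally show ?thesis .
qed

lemma SAME:
  fixes H :: "real \<times> real \<Rightarrow> ennreal"
  assumes H[measurable]: "H \<in> borel_measurable borel" and m: "m > 0"
  shows "(\<integral>\<^sup>+x. \<integral>\<^sup>+y. H (c + (x+y), d + (x\<^sup>2+y\<^sup>2)) * indicator {t. m \<le> \<bar>t\<bar>} (x-y) \<partial>lborel \<partial>lborel)
     \<le> ennreal (1/m) * (\<integral>\<^sup>+p. H p \<partial>lborel)"
proof -
  have "(\<integral>\<^sup>+x. \<integral>\<^sup>+y. H (c + (x+y), d + (x\<^sup>2+y\<^sup>2)) * indicator {t. m \<le> \<bar>t\<bar>} (x-y) \<partial>lborel \<partial>lborel)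
     = (\<integral>\<^sup>+x. \<integral>\<^sup>+u. H (c + u, d + (x\<^sup>2 + (u-x)\<^sup>2)) * indicator {t. m \<le> \<bar>t\<bar>} (2*x-u) \<partial>lborel \<partial>lborel)"
  proof (rule nn_integral_cong)
    fix x
    have "(\<integral>\<^sup>+y. H (c + (x+y), d + (x\<^sup>2+y\<^sup>2)) * indicator {t. m \<le> \<bar>t\<bar>} (x-y) \<partial>lborel)
       = ennreal \<bar>1\<bar> * (\<integral>\<^sup>+u. H (c + (x+(-x + 1*u)), d + (x\<^sup>2+(-x + 1*u)\<^sup>2)) * indicator {t. m \<le> \<bar>t\<bar>} (x-(-x + 1*u)) \<partial>lborel)"
      by (rule nn_integral_real_affine) auto
    also have "\<dots> = (\<integral>\<^sup>+u. H (c + u, d + (x\<^sup>2 + (u-x)\<^sup>2)) * indicator {t. m \<le> \<bar>t\<bar>} (2*x-u) \<partial>lborel)"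
      by (auto intro!: nn_integral_cong simp: algebra_simps power2_eq_square)
    finally show "(\<integral>\<^sup>+y. H (c + (x+y), d + (x\<^sup>2+y\<^sup>2)) * indicator {t. m \<le> \<bar>t\<bar>} (x-y) \<partial>lborel)
       = (\<integral>\<^sup>+u. H (c + u, d + (x\<^sup>2 + (u-x)\<^sup>2)) * indicator {t. m \<le> \<bar>t\<bar>} (2*x-u) \<partial>lborel)" .
  qed
  also have "\<dots> = (\<integral>\<^sup>+u. \<integral>\<^sup>+x. H (c + u, d + (x\<^sup>2 + (u-x)\<^sup>2)) * indicator {t. m \<le> \<bar>t\<bar>} (2*x-u) \<partial>lborel \<partial>lborel)"
    by (rule lborel_pair.Fubini'[symmetric]) (unfold case_prod_beta, measurable)
  also have "\<dots> \<le> (\<integral>\<^sup>+u. ennreal (1/m) * (\<integral>\<^sup>+s. H (c + 1*u, s) \<partial>lborel) \<partial>lborel)"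
  proof (rule nn_integral_mono)
    fix u
    have K[measurable]: "(\<lambda>s. H (c + u, (d + u\<^sup>2/2) + s)) \<in> borel_measurable borel" by measurable
    have "(\<integral>\<^sup>+x. H (c + u, d + (x\<^sup>2 + (u-x)\<^sup>2)) * indicator {t. m \<le> \<bar>t\<bar>} (2*x-u) \<partial>lborel)
        = ennreal \<bar>1\<bar> * (\<integral>\<^sup>+w. H (c + u, d + ((u/2 + 1*w)\<^sup>2 + (u-(u/2 + 1*w))\<^sup>2)) * indicator {t. m \<le> \<bar>t\<bar>} (2*(u/2 + 1*w)-u) \<partial>lborel)"
      by (rule nn_integral_real_affine) auto
    also have "\<dots> = (\<integral>\<^sup>+w. H (c + u, (d + u\<^sup>2/2) + 2 * w\<^sup>2) * indicator {w. m/2 \<le> \<bar>w\<bar>} w \<partial>lborel)"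
      by (auto intro!: nn_integral_cong simp: algebra_simps power2_eq_square indicator_def abs_mult)
    also have "\<dots> \<le> ennreal (1/(2*(m/2))) * (\<integral>\<^sup>+s. H (c + u, (d + u\<^sup>2/2) + s) \<partial>lborel)"
      by (rule Q_full[OF K, of 2 "m/2"]) (use m in auto)
    also have "\<dots> = ennreal (1/m) * (\<integral>\<^sup>+s. H (c + 1*u, s) \<partial>lborel)"
      using transl[of "\<lambda>s. H (c + u, s)" "d + u\<^sup>2/2"] m by simp
    finally show "(\<integral>\<^sup>+x. H (c + u, d + (x\<^sup>2 + (u-x)\<^sup>2)) * indicator {t. m \<le> \<bar>t\<bar>} (2*x-u) \<partial>lborel)
       \<le> ennreal (1/m) * (\<integral>\<^sup>+s. H (c + 1*u, s) \<partial>lborel)" .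
  qed
  also have "\<dots> = ennreal (1/m) * (\<integral>\<^sup>+u. \<integral>\<^sup>+s. H (c + 1*u, s) \<partial>lborel \<partial>lborel)"
    by (rule nn_integral_cmult) (simp add: lborel_prod)
  also have "\<dots> = ennreal (1/m) * (\<integral>\<^sup>+p. H p \<partial>lborel)"
    using H_iter[OF H, of 1 c] by simp
  finally show ?thesis .
qed



lemma vec_nth_meas[measurable]: "(\<lambda>x::real^3. x $ n) \<in> borel_measurable borel"
  by (intro borel_measurable_continuous_onI linear_continuous_on bounded_linear_vec_nth)

lemma linear_meas: "linear (l::real^3 \<Rightarrow> real) \<Longrightarrow> l \<in> borel_measurable borel"
  by (intro borel_measurable_continuous_onI linear_continuous_on) (simp add: linear_conv_bounded_linear)

definition phi :: "real^3 \<Rightarrow> real \<times> real" where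
  "phi \<xi> = (\<xi>$1 - \<xi>$2 + \<xi>$3, (\<xi>$1)\<^sup>2 - (\<xi>$2)\<^sup>2 + (\<xi>$3)\<^sup>2)"

lemma phi_meas[measurable]: "phi \<in> borel_measurable borel"
  unfolding phi_def
  by (intro borel_measurable_continuous_onI continuous_on_Pair)
     (auto intro!: continuous_intros)

lemma prod3:
  assumes "i \<noteq> j" "j \<noteq> k" "i \<noteq> k"
  shows "(f::3 \<Rightarrow> ennreal) 1 * f 2 * f 3 = f i * f j * f k"
proof -
  have p1: "prod f UNIV = f i * (f j * f k)" using assms unfolding UNIV3[OF assms] by simp
  have d: "(1::3) \<noteq> 2" "(2::3) \<noteq> 3" "(1::3) \<noteq> 3" by simp_all
  have p2: "prod f UNIV = f 1 * (f 2 * f 3)" unfolding UNIV3[OF d] using d by simp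
  from p1 p2 show ?thesis by (simp add: mult.assoc)
qed

lemma opp_case:
  fixes H :: "real \<times> real \<Rightarrow> ennreal"
  assumes H[measurable]: "H \<in> borel_measurable borel" and s: "\<bar>\<sigma>\<bar> = 1" and r: "r > 0"
    and eq: "\<And>x y. \<Phi> x y = (c + \<sigma>*(x-y), d + \<sigma>*(x\<^sup>2-y\<^sup>2))"
  shows "(\<integral>\<^sup>+x. \<integral>\<^sup>+y. H (\<Phi> x y) * indicator {t. r \<le> \<bar>t\<bar>} (x-y) \<partial>lborel \<partial>lborel)
     \<le> ennreal (1/r) * (\<integral>\<^sup>+p. H p \<partial>lborel)"
proof -
  have "(\<integral>\<^sup>+x. \<integral>\<^sup>+y. H (\<Phi> x y) * indicator {t. r \<le> \<bar>t\<bar>} (x-y) \<partial>lborel \<partial>lborel)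
     \<le> ennreal (1/(2*r)) * (\<integral>\<^sup>+p. H p \<partial>lborel)"
    unfolding eq by (rule OPP[OF H s r])
  also have "\<dots> \<le> ennreal (1/r) * (\<integral>\<^sup>+p. H p \<partial>lborel)"
    using r by (intro mult_right_mono ennreal_leI) (auto simp: frac_le)
  finally show ?thesis .
qed

lemma same_case:
  fixes H :: "real \<times> real \<Rightarrow> ennreal"
  assumes H[measurable]: "H \<in> borel_measurable borel" and r: "r > 0"
    and eq: "\<And>x y. \<Phi> x y = (c + (x+y), d + (x\<^sup>2+y\<^sup>2))"
  shows "(\<integral>\<^sup>+x. \<integral>\<^sup>+y. H (\<Phi> x y) * indicator {t. r \<le> \<bar>t\<bar>} (x-y) \<partial>lborel \<partial>lborel)
     \<le> ennreal (1/r) * (\<integral>\<^sup>+p. H p \<partial>lborel)"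
  unfolding eq by (rule SAME[OF H r])



lemma inner_bound:
  fixes H :: "real \<times> real \<Rightarrow> ennreal"
  assumes H[measurable]: "H \<in> borel_measurable borel" and r: "r > 0" and ki: "k \<noteq> i"
  shows "(\<integral>\<^sup>+x. \<integral>\<^sup>+y. H (phi (psi k i z x y)) * indicator {t. r \<le> \<bar>t\<bar>} (x-y) \<partial>lborel \<partial>lborel)
     \<le> ennreal (1/r) * (\<integral>\<^sup>+p. H p \<partial>lborel)"
proof -
  have k3: "k = 1 \<or> k = 2 \<or> k = 3" and i3: "i = 1 \<or> i = 2 \<or> i = 3" using exhaust_3 by auto
  have c21: "phi (psi 2 1 z x y) = (-z + (x+y), -z\<^sup>2 + (x\<^sup>2+y\<^sup>2))" for x y
    by (simp add: phi_def psi_def)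
  have c23: "phi (psi 2 3 z x y) = (-z + (x+y), -z\<^sup>2 + (x\<^sup>2+y\<^sup>2))" for x y
    by (simp add: phi_def psi_def)
  have c12: "phi (psi 1 2 z x y) = (z + (-1)*(x-y), z\<^sup>2 + (-1)*(x\<^sup>2-y\<^sup>2))" for x y
    by (simp add: phi_def psi_def)
  have c13: "phi (psi 1 3 z x y) = (z + 1*(x-y), z\<^sup>2 + 1*(x\<^sup>2-y\<^sup>2))" for x y
    by (simp add: phi_def psi_def)
  have c31: "phi (psi 3 1 z x y) = (z + 1*(x-y), z\<^sup>2 + 1*(x\<^sup>2-y\<^sup>2))" for x y
    by (simp add: phi_def psi_def)
  have c32: "phi (psi 3 2 z x y) = (z + (-1)*(x-y), z\<^sup>2 + (-1)*(x\<^sup>2-y\<^sup>2))" for x y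
    by (simp add: phi_def psi_def)
  have "(k = 2 \<and> (i = 1 \<or> i = 3)) \<or> (k = 1 \<and> (i = 2 \<or> i = 3)) \<or> (k = 3 \<and> (i = 1 \<or> i = 2))"
    using k3 i3 ki by auto
  then show ?thesis
    using same_case[OF H r c21] same_case[OF H r c23]
      opp_case[OF H _ r c12] opp_case[OF H _ r c13] opp_case[OF H _ r c31] opp_case[OF H _ r c32]
    by auto
qed
lemma CORE:
  fixes gg :: "3 \<Rightarrow> real \<Rightarrow> ennreal" and e :: "real \<Rightarrow> ennreal" and G :: "real \<times> real \<Rightarrow> ennreal"
    and l :: "real^3 \<Rightarrow> real"
  assumes ijk: "i \<noteq> j" "j \<noteq> k" "i \<noteq> k" and l: "linear l" and lk: "l (axis k 1) \<noteq> 0" and r: "r > 0"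
    and gm[measurable]: "\<And>n. gg n \<in> borel_measurable borel" and em[measurable]: "e \<in> borel_measurable borel"
    and Gm[measurable]: "G \<in> borel_measurable borel"
  shows "(\<integral>\<^sup>+\<xi>. gg 1 (\<xi>$1) * gg 2 (\<xi>$2) * gg 3 (\<xi>$3) * G (phi \<xi>) * indicator {\<xi>. r \<le> \<bar>\<xi>$i - \<xi>$j\<bar>} \<xi> * e (l \<xi>) \<partial>lborel)\<^sup>2
     \<le> ennreal (1/(\<bar>l (axis k 1)\<bar> * r)) * (((\<integral>\<^sup>+x. (gg i x)\<^sup>2 \<partial>lborel) * (\<integral>\<^sup>+x. (gg j x)\<^sup>2 \<partial>lborel) * (\<integral>\<^sup>+x. (e x)\<^sup>2 \<partial>lborel))
        * ((\<integral>\<^sup>+x. (gg k x)\<^sup>2 \<partial>lborel) * (\<integral>\<^sup>+p. (G p)\<^sup>2 \<partial>lborel)))"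
proof -
  have lm[measurable]: "l \<in> borel_measurable borel" using l by (rule linear_meas)
  define li where "li = l (axis i 1)"
  define lj where "lj = l (axis j 1)"
  define lk where "lk = l (axis k 1)"
  define F where "F \<xi> = gg i (\<xi>$i) * gg j (\<xi>$j) * e (l \<xi>)" for \<xi> :: "real^3"
  define Hh where "Hh \<xi> = gg k (\<xi>$k) * G (phi \<xi>) * indicator {\<xi>. r \<le> \<bar>\<xi>$i - \<xi>$j\<bar>} \<xi>" for \<xi> :: "real^3"
  have Fm[measurable]: "F \<in> borel_measurable borel" unfolding F_def by measurable
  have Hm[measurable]: "Hh \<in> borel_measurable borel" unfolding Hh_def by measurable
  have eqi: "gg 1 (\<xi>$1) * gg 2 (\<xi>$2) * gg 3 (\<xi>$3) * G (phi \<xi>) * indicator {\<xi>. r \<le> \<bar>\<xi>$i - \<xi>$j\<bar>} \<xi> * e (l \<xi>)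
     = F \<xi> * Hh \<xi>" for \<xi>
    using prod3[OF ijk, of "\<lambda>n. gg n (\<xi>$n)"] unfolding F_def Hh_def by (simp add: mult_ac)
  have CS: "(\<integral>\<^sup>+\<xi>. F \<xi> * Hh \<xi> \<partial>lborel)\<^sup>2 \<le> (\<integral>\<^sup>+\<xi>. (F \<xi>)\<^sup>2 \<partial>lborel) * (\<integral>\<^sup>+\<xi>. (Hh \<xi>)\<^sup>2 \<partial>lborel)"
    by (rule Cauchy_Schwarz_nn_integral) auto
  have A: "(\<integral>\<^sup>+\<xi>. (F \<xi>)\<^sup>2 \<partial>lborel) = ennreal (1/\<bar>lk\<bar>) * ((\<integral>\<^sup>+x. (gg i x)\<^sup>2 \<partial>lborel) * (\<integral>\<^sup>+x. (gg j x)\<^sup>2 \<partial>lborel) * (\<integral>\<^sup>+x. (e x)\<^sup>2 \<partial>lborel))"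
  proof -
    have Fpsi: "F (psi i j x y z) = gg i x * gg j y * e ((x*li + y*lj) + lk * z)" for x y z
      using ijk unfolding F_def li_def lj_def lk_def linear_psi[OF ijk l]
      by (simp add: psi_def mult.commute)
    have "(\<integral>\<^sup>+\<xi>. (F \<xi>)\<^sup>2 \<partial>lborel) = (\<integral>\<^sup>+x. \<integral>\<^sup>+y. \<integral>\<^sup>+z. (F (psi i j x y z))\<^sup>2 \<partial>lborel \<partial>lborel \<partial>lborel)"
      by (rule nn_integral_psi[OF ijk]) measurable
    also have "\<dots> = (\<integral>\<^sup>+x. \<integral>\<^sup>+y. ((gg i x)\<^sup>2 * (gg j y)\<^sup>2) * (\<integral>\<^sup>+z. (e ((x*li + y*lj) + lk * z))\<^sup>2 \<partial>lborel) \<partial>lborel \<partial>lborel)"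
      unfolding Fpsi power_mult_distrib
      by (intro nn_integral_cong, subst nn_integral_cmult[symmetric]) auto
    also have "\<dots> = (\<integral>\<^sup>+x. \<integral>\<^sup>+y. ((gg i x)\<^sup>2 * (gg j y)\<^sup>2) * (ennreal (1/\<bar>lk\<bar>) * (\<integral>\<^sup>+t. (e t)\<^sup>2 \<partial>lborel)) \<partial>lborel \<partial>lborel)"
      using aff_inv[of "\<lambda>t. (e t)\<^sup>2" lk] lk unfolding lk_def by simp
    also have "\<dots> = (\<integral>\<^sup>+x. (gg i x)\<^sup>2 * ((\<integral>\<^sup>+y. (gg j y)\<^sup>2 \<partial>lborel) * (ennreal (1/\<bar>lk\<bar>) * (\<integral>\<^sup>+t. (e t)\<^sup>2 \<partial>lborel))) \<partial>lborel)"
      by (intro nn_integral_cong) (simp add: nn_integral_cmult nn_integral_multc mult.assoc)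
    also have "\<dots> = (\<integral>\<^sup>+x. (gg i x)\<^sup>2 \<partial>lborel) * ((\<integral>\<^sup>+y. (gg j y)\<^sup>2 \<partial>lborel) * (ennreal (1/\<bar>lk\<bar>) * (\<integral>\<^sup>+t. (e t)\<^sup>2 \<partial>lborel)))"
      by (simp add: nn_integral_multc)
    finally show ?thesis by (simp add: mult_ac)
  qed
  have B: "(\<integral>\<^sup>+\<xi>. (Hh \<xi>)\<^sup>2 \<partial>lborel) \<le> ennreal (1/r) * ((\<integral>\<^sup>+x. (gg k x)\<^sup>2 \<partial>lborel) * (\<integral>\<^sup>+p. (G p)\<^sup>2 \<partial>lborel))"
  proof -
    have kij: "k \<noteq> i" "i \<noteq> j" "k \<noteq> j" using ijk by auto
    have Hpsi: "(Hh (psi k i z x y))\<^sup>2 = (gg k z)\<^sup>2 * ((G (phi (psi k i z x y)))\<^sup>2 * indicator {t. r \<le> \<bar>t\<bar>} (x-y))" for x y z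
      using kij unfolding Hh_def by (simp add: psi_def indicator_def power_mult_distrib)
    have "(\<integral>\<^sup>+\<xi>. (Hh \<xi>)\<^sup>2 \<partial>lborel) = (\<integral>\<^sup>+z. \<integral>\<^sup>+x. \<integral>\<^sup>+y. (Hh (psi k i z x y))\<^sup>2 \<partial>lborel \<partial>lborel \<partial>lborel)"
      by (rule nn_integral_psi[OF kij]) measurable
    also have "\<dots> = (\<integral>\<^sup>+z. (gg k z)\<^sup>2 * (\<integral>\<^sup>+x. \<integral>\<^sup>+y. (G (phi (psi k i z x y)))\<^sup>2 * indicator {t. r \<le> \<bar>t\<bar>} (x-y) \<partial>lborel \<partial>lborel) \<partial>lborel)"
      unfolding Hpsi
      by (intro nn_integral_cong, subst nn_integral_cmult[symmetric]) (auto intro!: nn_integral_cong nn_integral_cmult)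
    also have "\<dots> \<le> (\<integral>\<^sup>+z. (gg k z)\<^sup>2 * (ennreal (1/r) * (\<integral>\<^sup>+p. (G p)\<^sup>2 \<partial>lborel)) \<partial>lborel)"
      by (intro nn_integral_mono mult_left_mono inner_bound r) (use kij in auto)
    also have "\<dots> = (\<integral>\<^sup>+z. (gg k z)\<^sup>2 \<partial>lborel) * (ennreal (1/r) * (\<integral>\<^sup>+p. (G p)\<^sup>2 \<partial>lborel))"
      by (rule nn_integral_multc) simp
    also have "\<dots> = ennreal (1/r) * ((\<integral>\<^sup>+x. (gg k x)\<^sup>2 \<partial>lborel) * (\<integral>\<^sup>+p. (G p)\<^sup>2 \<partial>lborel))"
      by (simp add: mult_ac)
    finally show ?thesis .
  qed
  have "(\<integral>\<^sup>+\<xi>. gg 1 (\<xi>$1) * gg 2 (\<xi>$2) * gg 3 (\<xi>$3) * G (phi \<xi>) * indicator {\<xi>. r \<le> \<bar>\<xi>$i - \<xi>$j\<bar>} \<xi> * e (l \<xi>) \<partial>lborel)\<^sup>2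
     = (\<integral>\<^sup>+\<xi>. F \<xi> * Hh \<xi> \<partial>lborel)\<^sup>2" by (simp add: eqi)
  also have "\<dots> \<le> (\<integral>\<^sup>+\<xi>. (F \<xi>)\<^sup>2 \<partial>lborel) * (\<integral>\<^sup>+\<xi>. (Hh \<xi>)\<^sup>2 \<partial>lborel)" by (rule CS)
  also have "\<dots> \<le> (ennreal (1/\<bar>lk\<bar>) * ((\<integral>\<^sup>+x. (gg i x)\<^sup>2 \<partial>lborel) * (\<integral>\<^sup>+x. (gg j x)\<^sup>2 \<partial>lborel) * (\<integral>\<^sup>+x. (e x)\<^sup>2 \<partial>lborel)))
      * (ennreal (1/r) * ((\<integral>\<^sup>+x. (gg k x)\<^sup>2 \<partial>lborel) * (\<integral>\<^sup>+p. (G p)\<^sup>2 \<partial>lborel)))"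
    unfolding A by (rule mult_left_mono[OF B]) simp
  also have "\<dots> = ennreal (1/(\<bar>l (axis k 1)\<bar> * r)) * (((\<integral>\<^sup>+x. (gg i x)\<^sup>2 \<partial>lborel) * (\<integral>\<^sup>+x. (gg j x)\<^sup>2 \<partial>lborel) * (\<integral>\<^sup>+x. (e x)\<^sup>2 \<partial>lborel))
        * ((\<integral>\<^sup>+x. (gg k x)\<^sup>2 \<partial>lborel) * (\<integral>\<^sup>+p. (G p)\<^sup>2 \<partial>lborel)))"
  proof -
    have split: "ennreal (1/(\<bar>l (axis k 1)\<bar> * r)) = ennreal (1/\<bar>lk\<bar>) * ennreal (1/r)"
      using r lk unfolding lk_def by (subst ennreal_mult[symmetric]) auto
    show ?thesis unfolding split by (simp add: mult_ac)
  qed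
  finally show ?thesis .
qed



lemma esqrt_ennreal: "0 \<le> a \<Longrightarrow> esqrt (ennreal a) = ennreal (sqrt a)"
  by (simp add: esqrt_def)

lemma esqrt_top[simp]: "esqrt top = top" by (simp add: esqrt_def)

lemma esqrt_sq: "esqrt (x\<^sup>2) = x"
proof (cases x)
  case (real r)
  then show ?thesis by (simp add: esqrt_def ennreal_power)
qed (simp add: esqrt_def)

lemma esqrt_0_iff: "esqrt x = 0 \<longleftrightarrow> x = 0"
  by (cases x) (auto simp: esqrt_def)

lemma esqrt_mono: "x \<le> y \<Longrightarrow> esqrt x \<le> esqrt y"
proof (cases y)
  case (real r)
  assume "x \<le> y"
  then obtain s where "x = ennreal s" "0 \<le> s" "s \<le> r" using real
    by (cases x) (auto simp: ennreal_le_iff top_unique)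
  then show ?thesis using real by (simp add: esqrt_def)
qed (simp add: esqrt_def)

lemma esqrt_mult: "esqrt (x * y) = esqrt x * esqrt y"
proof (cases x)
  case (real a)
  show ?thesis
  proof (cases y)
    case (real b)
    then show ?thesis using \<open>x = ennreal a\<close> \<open>0 \<le> a\<close>
      by (simp add: esqrt_def ennreal_mult[symmetric] real_sqrt_mult del: ennreal_mult')
  next
    case top
    then show ?thesis using \<open>x = ennreal a\<close> \<open>0 \<le> a\<close>
      by (cases "a = 0") (auto simp: esqrt_def ennreal_mult_top)
  qed
next
  case top
  then show ?thesis
    by (cases "y = 0") (auto simp: esqrt_def ennreal_top_mult esqrt_0_iff[unfolded esqrt_def])
qed

lemma MAJ:
  fixes f :: "'a::euclidean_space \<Rightarrow> ennreal"
  assumes "f \<in> borel_measurable lebesgue"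
  shows "\<exists>f'. f' \<in> borel_measurable borel \<and> (\<forall>x. f x \<le> f' x) \<and> (\<integral>\<^sup>+x. (f' x)\<^sup>2 \<partial>lborel) = (\<integral>\<^sup>+x. (f x)\<^sup>2 \<partial>lebesgue)"
proof -
  obtain g where g: "g \<in> borel_measurable lborel" and ae: "AE x in lborel. f x = g x"
    using completion_ex_borel_measurable[OF assms] by blast
  obtain N where N0: "{x \<in> space lborel. \<not> f x = g x} \<subseteq> N" "emeasure lborel N = 0" "N \<in> sets lborel"
    using AE_E[OF ae] by blast
  then have N: "N \<in> null_sets lborel" "{x \<in> space lborel. \<not> f x = g x} \<subseteq> N" by (auto simp: null_sets_def)
  define f' where "f' x = (if x \<in> N then top else g x)" for x
  have Nb: "N \<in> sets borel" using N by auto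
  have gb: "g \<in> borel_measurable borel" using g by simp
  have fm: "f' \<in> borel_measurable borel" unfolding f'_def
    by (rule measurable_If_set) (use gb Nb in auto)
  have fg: "f x = g x" if "x \<notin> N" for x using N(2) that by auto
  have le: "f x \<le> f' x" for x using fg[of x] by (auto simp: f'_def)
  have "AE x in lborel. f' x = f x"
    using AE_not_in[OF N(1)] by eventually_elim (simp add: f'_def fg)
  then have ae2: "AE x in lebesgue. (f' x)\<^sup>2 = (f x)\<^sup>2" by (auto dest!: AE_completion elim!: eventually_mono)
  have "(\<integral>\<^sup>+x. (f' x)\<^sup>2 \<partial>lborel) = (\<integral>\<^sup>+x. (f' x)\<^sup>2 \<partial>lebesgue)" by (simp add: nn_integral_completion)
  also have "\<dots> = (\<integral>\<^sup>+x. (f x)\<^sup>2 \<partial>lebesgue)" by (rule nn_integral_cong_AE[OF ae2])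
  finally show ?thesis using fm le by blast
qed

theorem lemma4p4:
  fixes i j k :: 3 and l :: "real^3 \<Rightarrow> real"
  assumes "i \<noteq> j" "j \<noteq> k" "i \<noteq> k"
    and "linear l" and "l (axis k 1) \<noteq> 0"
  shows "\<exists>C::real. \<forall>(G :: real \<times> real \<Rightarrow> ennreal) (g1 :: real \<Rightarrow> ennreal) g2 g3
      (E :: real set) (S :: (real^3) set).
      G \<in> borel_measurable lebesgue \<longrightarrow> g1 \<in> borel_measurable lebesgue \<longrightarrow>
      g2 \<in> borel_measurable lebesgue \<longrightarrow> g3 \<in> borel_measurable lebesgue \<longrightarrow>
      E \<in> sets lebesgue \<longrightarrow> S \<in> sets lebesgue \<longrightarrow>
      (\<integral>\<^sup>+ \<xi>. g1 (\<xi>$1) * g2 (\<xi>$2) * g3 (\<xi>$3)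
          * G (\<xi>$1 - \<xi>$2 + \<xi>$3, (\<xi>$1)\<^sup>2 - (\<xi>$2)\<^sup>2 + (\<xi>$3)\<^sup>2)
          * indicator S \<xi> * indicator E (l \<xi>) \<partial>lebesgue)
      \<le> ennreal C * L2norm G * L2norm g1 * L2norm g2 * L2norm g3
          * esqrt (emeasure lebesgue E)
          * inverse (esqrt (INF \<xi>\<in>S. ennreal \<bar>\<xi>$i - \<xi>$j\<bar>))"
proof -
  note ijk = assms(1-3)
  define lk where "lk = l (axis k 1)"
  have lk0: "lk \<noteq> 0" using assms(5) by (simp add: lk_def)
  define C where "C = 1 / sqrt \<bar>lk\<bar>"
  have Cpos: "C > 0" using lk0 by (simp add: C_def)
  have lm[measurable]: "l \<in> borel_measurable borel" using assms(4) by (rule linear_meas)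
  show ?thesis
  proof (intro exI[of _ C] allI impI)
    fix G :: "real \<times> real \<Rightarrow> ennreal" and g1 g2 g3 :: "real \<Rightarrow> ennreal" and E :: "real set" and S :: "(real^3) set"
    assume Gm: "G \<in> borel_measurable lebesgue" and g1m: "g1 \<in> borel_measurable lebesgue"
      and g2m: "g2 \<in> borel_measurable lebesgue" and g3m: "g3 \<in> borel_measurable lebesgue"
      and Em: "E \<in> sets lebesgue" and Sm: "S \<in> sets lebesgue"
    obtain G' where G'm[measurable]: "G' \<in> borel_measurable borel" and G'le: "\<And>x. G x \<le> G' x"
      and G'n: "(\<integral>\<^sup>+x. (G' x)\<^sup>2 \<partial>lborel) = (\<integral>\<^sup>+x. (G x)\<^sup>2 \<partial>lebesgue)"
      using MAJ[OF Gm] by blast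
    obtain g1' where g1'm[measurable]: "g1' \<in> borel_measurable borel" and g1'le: "\<And>x. g1 x \<le> g1' x"
      and g1'n: "(\<integral>\<^sup>+x. (g1' x)\<^sup>2 \<partial>lborel) = (\<integral>\<^sup>+x. (g1 x)\<^sup>2 \<partial>lebesgue)"
      using MAJ[OF g1m] by blast
    obtain g2' where g2'm[measurable]: "g2' \<in> borel_measurable borel" and g2'le: "\<And>x. g2 x \<le> g2' x"
      and g2'n: "(\<integral>\<^sup>+x. (g2' x)\<^sup>2 \<partial>lborel) = (\<integral>\<^sup>+x. (g2 x)\<^sup>2 \<partial>lebesgue)"
      using MAJ[OF g2m] by blast
    obtain g3' where g3'm[measurable]: "g3' \<in> borel_measurable borel" and g3'le: "\<And>x. g3 x \<le> g3' x"
      and g3'n: "(\<integral>\<^sup>+x. (g3' x)\<^sup>2 \<partial>lborel) = (\<integral>\<^sup>+x. (g3 x)\<^sup>2 \<partial>lebesgue)"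
      using MAJ[OF g3m] by blast
    have Eim: "indicator E \<in> borel_measurable lebesgue" using Em by simp
    obtain e' where e'm[measurable]: "e' \<in> borel_measurable borel" and e'le: "\<And>x. indicator E x \<le> e' x"
      and e'n: "(\<integral>\<^sup>+x. (e' x)\<^sup>2 \<partial>lborel) = (\<integral>\<^sup>+x. (indicator E x)\<^sup>2 \<partial>lebesgue)"
      using MAJ[OF Eim] by blast
    have "(\<integral>\<^sup>+x. (indicator E x)\<^sup>2 \<partial>lebesgue) = (\<integral>\<^sup>+x. indicator E x \<partial>lebesgue)"
      by (intro nn_integral_cong) (simp add: indicator_def)
    also have "\<dots> = emeasure lebesgue E" using Em by simp
    finally have e'n2: "(\<integral>\<^sup>+x. (e' x)\<^sup>2 \<partial>lborel) = emeasure lebesgue E" using e'n by simp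
    define gg where "gg n = (if n = 1 then g1' else if n = 2 then g2' else g3')" for n :: 3
    have gg1: "gg 1 = g1'" and gg2: "gg 2 = g2'" and gg3: "gg 3 = g3'" by (simp_all add: gg_def)
    have ggm[measurable]: "gg n \<in> borel_measurable borel" for n by (simp add: gg_def)
    define N where "N f = (\<integral>\<^sup>+x. (f x)\<^sup>2 \<partial>lborel)" for f :: "real \<Rightarrow> ennreal"
    define NG where "NG = (\<integral>\<^sup>+p. (G' p)\<^sup>2 \<partial>lborel)"
    have L2G: "L2norm G = esqrt NG" unfolding L2norm_def NG_def G'n ..
    have L21: "L2norm g1 = esqrt (N (gg 1))" unfolding L2norm_def N_def gg1 g1'n ..
    have L22: "L2norm g2 = esqrt (N (gg 2))" unfolding L2norm_def N_def gg2 g2'n ..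
    have L23: "L2norm g3 = esqrt (N (gg 3))" unfolding L2norm_def N_def gg3 g3'n ..
    have L2E: "esqrt (emeasure lebesgue E) = esqrt (N e')" unfolding N_def e'n2 ..
    define m where "m = (INF \<xi>\<in>S. ennreal \<bar>\<xi>$i - \<xi>$j\<bar>)"
    define F0 where "F0 \<xi> = gg 1 (\<xi>$1) * gg 2 (\<xi>$2) * gg 3 (\<xi>$3) * G' (phi \<xi>) * e' (l \<xi>)" for \<xi> :: "real^3"
    have F0m[measurable]: "F0 \<in> borel_measurable borel" unfolding F0_def by measurable
    define Fint where "Fint r \<xi> = gg 1 (\<xi>$1) * gg 2 (\<xi>$2) * gg 3 (\<xi>$3) * G' (phi \<xi>) * indicator {\<xi>. r \<le> \<bar>\<xi>$i - \<xi>$j\<bar>} \<xi> * e' (l \<xi>)"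
      for r and \<xi> :: "real^3"
    have Fint_eq: "Fint r \<xi> = F0 \<xi> * indicator {\<xi>. r \<le> \<bar>\<xi>$i - \<xi>$j\<bar>} \<xi>" for r \<xi>
      unfolding Fint_def F0_def by (simp add: mult_ac)
    have core: "(\<integral>\<^sup>+\<xi>. Fint r \<xi> \<partial>lborel)\<^sup>2 \<le> ennreal (1/(\<bar>lk\<bar> * r)) * ((N (gg i) * N (gg j) * N e') * (N (gg k) * NG))"
      if "r > 0" for r
      unfolding Fint_def N_def NG_def lk_def
      by (rule CORE[OF ijk assms(4,5) that]) simp_all
    have NN: "N (gg 1) * N (gg 2) * N (gg 3) = N (gg i) * N (gg j) * N (gg k)"
      by (rule prod3[OF ijk, of "\<lambda>n. N (gg n)"])
    have EN: "esqrt (N (gg 1)) * esqrt (N (gg 2)) * esqrt (N (gg 3)) = esqrt (N (gg i)) * esqrt (N (gg j)) * esqrt (N (gg k))"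
      by (rule prod3[OF ijk, of "\<lambda>n. esqrt (N (gg n))"])
    define LHS where "LHS = (\<integral>\<^sup>+ \<xi>. g1 (\<xi>$1) * g2 (\<xi>$2) * g3 (\<xi>$3)
          * G (\<xi>$1 - \<xi>$2 + \<xi>$3, (\<xi>$1)\<^sup>2 - (\<xi>$2)\<^sup>2 + (\<xi>$3)\<^sup>2)
          * indicator S \<xi> * indicator E (l \<xi>) \<partial>lebesgue)"
    have LHS_le: "LHS \<le> (\<integral>\<^sup>+\<xi>. F0 \<xi> * indicator S \<xi> \<partial>lebesgue)"
      unfolding LHS_def F0_def gg1 gg2 gg3
    proof (rule nn_integral_mono)
      fix \<xi> :: "real^3"
      have "g1 (\<xi>$1) * g2 (\<xi>$2) * g3 (\<xi>$3) * G (phi \<xi>) * indicator E (l \<xi>) \<le> g1' (\<xi>$1) * g2' (\<xi>$2) * g3' (\<xi>$3) * G' (phi \<xi>) * e' (l \<xi>)"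
        by (intro mult_mono g1'le g2'le g3'le G'le e'le) auto
      then have "g1 (\<xi>$1) * g2 (\<xi>$2) * g3 (\<xi>$3) * G (phi \<xi>) * indicator E (l \<xi>) * indicator S \<xi> \<le> g1' (\<xi>$1) * g2' (\<xi>$2) * g3' (\<xi>$3) * G' (phi \<xi>) * e' (l \<xi>) * indicator S \<xi>"
        by (rule mult_right_mono) simp
      then show "g1 (\<xi>$1) * g2 (\<xi>$2) * g3 (\<xi>$3) * G (\<xi>$1 - \<xi>$2 + \<xi>$3, (\<xi>$1)\<^sup>2 - (\<xi>$2)\<^sup>2 + (\<xi>$3)\<^sup>2) * indicator S \<xi> * indicator E (l \<xi>)
         \<le> g1' (\<xi>$1) * g2' (\<xi>$2) * g3' (\<xi>$3) * G' (phi \<xi>) * e' (l \<xi>) * indicator S \<xi>"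
        by (simp add: phi_def mult_ac)
    qed
    have goal: "LHS \<le> ennreal C * esqrt NG * esqrt (N (gg 1)) * esqrt (N (gg 2)) * esqrt (N (gg 3)) * esqrt (N e') * inverse (esqrt m)"
    proof (cases m)
      case top
      have "S = {}"
      proof (rule ccontr)
        assume "S \<noteq> {}"
        then obtain \<xi> where "\<xi> \<in> S" by auto
        then have "m \<le> ennreal \<bar>\<xi>$i - \<xi>$j\<bar>" unfolding m_def by (rule INF_lower)
        then show False using top by (simp add: top_unique)
      qed
      then have "LHS \<le> 0" using LHS_le by simp
      then show ?thesis by simp
    next
      case (real r)
      show ?thesis
      proof (cases "r = 0")
        case False
        then have r: "r > 0" using real by auto
        have sub: "S \<subseteq> {\<xi>. r \<le> \<bar>\<xi>$i - \<xi>$j\<bar>}"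
        proof
          fix \<xi> assume "\<xi> \<in> S"
          then have "m \<le> ennreal \<bar>\<xi>$i - \<xi>$j\<bar>" unfolding m_def by (rule INF_lower)
          then show "\<xi> \<in> {\<xi>. r \<le> \<bar>\<xi>$i - \<xi>$j\<bar>}" using real by (simp add: ennreal_le_iff)
        qed
        have "LHS \<le> (\<integral>\<^sup>+\<xi>. Fint r \<xi> \<partial>lebesgue)"
          using LHS_le unfolding Fint_eq
          by (rule order_trans) (use sub in \<open>auto intro!: nn_integral_mono mult_left_mono simp: indicator_def\<close>)
        also have "\<dots> = (\<integral>\<^sup>+\<xi>. Fint r \<xi> \<partial>lborel)" by (simp add: nn_integral_completion)
        also have "\<dots> = esqrt ((\<integral>\<^sup>+\<xi>. Fint r \<xi> \<partial>lborel)\<^sup>2)" by (simp add: esqrt_sq)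
        also have "\<dots> \<le> esqrt (ennreal (1/(\<bar>lk\<bar> * r)) * ((N (gg i) * N (gg j) * N e') * (N (gg k) * NG)))"
          by (rule esqrt_mono[OF core[OF r]])
        also have "\<dots> = ennreal (sqrt (1/(\<bar>lk\<bar> * r))) * ((esqrt (N (gg i)) * esqrt (N (gg j)) * esqrt (N e')) * (esqrt (N (gg k)) * esqrt NG))"
          using r by (simp add: esqrt_mult esqrt_ennreal)
        also have "ennreal (sqrt (1/(\<bar>lk\<bar> * r))) = ennreal C * inverse (esqrt m)"
          using r lk0 real by (simp add: esqrt_ennreal inverse_ennreal C_def ennreal_mult[symmetric] real_sqrt_mult real_sqrt_divide field_simps del: ennreal_mult')
        finally show ?thesis using EN by (simp add: mult_ac)
      next
        case True
        then have m0: "m = 0" using real by simp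
        show ?thesis
        proof (cases "esqrt NG * esqrt (N (gg 1)) * esqrt (N (gg 2)) * esqrt (N (gg 3)) * esqrt (N e') = 0")
          case False
          then have "ennreal C * esqrt NG * esqrt (N (gg 1)) * esqrt (N (gg 2)) * esqrt (N (gg 3)) * esqrt (N e') \<noteq> 0"
            using Cpos by (simp add: mult.assoc)
          then have "ennreal C * esqrt NG * esqrt (N (gg 1)) * esqrt (N (gg 2)) * esqrt (N (gg 3)) * esqrt (N e') * inverse (esqrt m) = top"
            using m0 by (simp add: esqrt_def ennreal_mult_eq_top_iff)
          then show ?thesis by simp
        next
          case True
          then have P0: "NG * (N (gg 1) * N (gg 2) * N (gg 3)) * N e' = 0"
            by (auto simp: esqrt_0_iff esqrt_mult[symmetric])
          have P1: "(N (gg i) * N (gg j) * N e') * (N (gg k) * NG) = 0"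
          proof -
            have "(N (gg i) * N (gg j) * N e') * (N (gg k) * NG) = NG * (N (gg i) * N (gg j) * N (gg k)) * N e'"
              by (simp add: mult_ac)
            also have "\<dots> = 0" using P0 NN by simp
            finally show ?thesis .
          qed
          have Z: "(\<integral>\<^sup>+\<xi>. Fint r \<xi> \<partial>lborel) = 0" if "r > 0" for r
            using core[OF that] P1 by simp
          have AEn: "AE \<xi> in lebesgue. \<forall>n::nat. F0 \<xi> * indicator {\<xi>. inverse (real (Suc n)) \<le> \<bar>\<xi>$i - \<xi>$j\<bar>} \<xi> = 0"
          proof (subst AE_all_countable, intro allI)
            fix n :: nat
            have "AE \<xi> in lborel. Fint (inverse (real (Suc n))) \<xi> = 0"
            proof -
              have Fm: "Fint (inverse (real (Suc n))) \<in> borel_measurable lborel"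
                unfolding Fint_def by measurable
              have "integral\<^sup>N lborel (Fint (inverse (real (Suc n)))) = 0"
                using Z[of "inverse (real (Suc n))"] by simp
              then show ?thesis using nn_integral_0_iff_AE[OF Fm] by simp
            qed
            then show "AE \<xi> in lebesgue. F0 \<xi> * indicator {\<xi>. inverse (real (Suc n)) \<le> \<bar>\<xi>$i - \<xi>$j\<bar>} \<xi> = 0"
              unfolding Fint_eq by (rule AE_completion)
          qed
          have hyp: "AE \<xi> in lebesgue. (\<xi>::real^3)$i \<noteq> \<xi>$j"
          proof -
            have a0: "axis i (1::real) - axis j 1 \<noteq> 0" using ijk by (simp add: axis_eq_axis)
            have "{x::real^3. (axis i (1::real) - axis j 1) \<bullet> x = 0} \<in> null_sets lebesgue"
              using negligible_hyperplane[of "axis i (1::real) - axis j 1" 0] a0 by (simp add: negligible_iff_null_sets)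
            from AE_not_in[OF this] show ?thesis
              by (rule eventually_mono) (simp add: inner_diff_left inner_axis')
          qed
          have "AE \<xi> in lebesgue. F0 \<xi> = 0"
            using AEn hyp
          proof eventually_elim
            case (elim \<xi>)
            then have "0 < \<bar>\<xi>$i - \<xi>$j\<bar>" by simp
            then obtain n where "inverse (real (Suc n)) < \<bar>\<xi>$i - \<xi>$j\<bar>" using reals_Archimedean by blast
            with elim(1)[rule_format, of n] show ?case by (simp add: indicator_def)
          qed
          then have "(\<integral>\<^sup>+\<xi>. F0 \<xi> \<partial>lebesgue) = 0"
            by (subst nn_integral_0_iff_AE) (auto intro: measurable_completion)
          moreover have "LHS \<le> (\<integral>\<^sup>+\<xi>. F0 \<xi> \<partial>lebesgue)"
            using LHS_le by (rule order_trans) (auto intro!: nn_integral_mono simp: indicator_def)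
          ultimately show ?thesis by simp
        qed
      qed
    qed
    then show "LHS \<le> ennreal C * L2norm G * L2norm g1 * L2norm g2 * L2norm g3 * esqrt (emeasure lebesgue E)
          * inverse (esqrt (INF \<xi>\<in>S. ennreal \<bar>\<xi>$i - \<xi>$j\<bar>))"
      unfolding L2G L21 L22 L23 L2E m_def .
  qed
qed

end
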